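(* Let $\Omega \subset \mathbb R\times\mathbb R^d$ be any set and $u:\Omega\to\mathbb R$ a function which at every point of $\Omega$ is twice differentiable in $x$ and differentiable in $t$. The following are equivalent: (1) There exist constants $0<\lambda\le\Lambda$ and a function $F$ on symmetric $d\times d$ matrices, uniformly elliptic with constants $\lambda,\Lambda$, such that $u_t = F(D^2u)$ at every point of $\Omega$. (2) There exists a constant $C\ge1$ such that for all pairs of points $(t,x),(s,y)\in\Omega$, writing $a = u_t(t,x)-u_t(s,y)$ and $M = D^2u(t,x)-D^2u(s,y)$, $$N := a_- + \operatorname{tr} M_+,\qquad D := a_+ + \operatorname{tr} M_-,$$ one has $C^{-1} D \le N \le C D$ (i.e. $C^{-1}\le N/D\le C$ whenever $D\neq0$).
   Context: A function $F$ on real symmetric $d\times d$ matrices is uniformly elliptic with constants $0<\lambda\le\Lambda$ if for all symmetric $A,B$ with $B \ge 0$, $\lambda \operatorname{tr} B \le F(A+B) - F(A) \le \Lambda \operatorname{tr} B$. For a real number $a$, $a_+=\max(a,0)$ and $a_- = \max(-a,0)$; for a symmetric matrix $M$, $M = M_+ - M_-$ with $M_\pm$ positive semidefinite with orthogonal ranges. *)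

theory Defs
  imports "HOL-Analysis.Analysis"
begin

type_synonym 'n smat = "real^'n^'n"

definition sym_mat :: "real^'n^'n \<Rightarrow> bool" where
  "sym_mat M \<longleftrightarrow> transpose M = M"

definition psd :: "real^'n^'n \<Rightarrow> bool" where
  "psd M \<longleftrightarrow> sym_mat M \<and> (\<forall>v. 0 \<le> v \<bullet> (M *v v))"

definition uniformly_elliptic :: "(real^'n^'n \<Rightarrow> real) \<Rightarrow> real \<Rightarrow> real \<Rightarrow> bool" where
  "uniformly_elliptic F lam Lam \<longleftrightarrow>
     (\<forall>A B. sym_mat A \<and> psd B \<longrightarrow>
        lam * trace B \<le> F (A + B) - F A \<and> F (A + B) - F A \<le> Lam * trace B)"

text \<open>Decomposition M = P - Q with P, Q positive semidefinite with orthogonal ranges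
  (for symmetric P, Q: range P orthogonal to range Q iff P ** Q = 0).\<close>
definition pn_decomp :: "real^'n^'n \<Rightarrow> real^'n^'n \<Rightarrow> real^'n^'n \<Rightarrow> bool" where
  "pn_decomp M P Q \<longleftrightarrow> psd P \<and> psd Q \<and> M = P - Q \<and> P ** Q = mat 0"

definition mat_pos :: "real^'n^'n \<Rightarrow> real^'n^'n" where
  "mat_pos M = (THE P. \<exists>Q. pn_decomp M P Q)"

definition mat_neg :: "real^'n^'n \<Rightarrow> real^'n^'n" where
  "mat_neg M = (THE Q. \<exists>P. pn_decomp M P Q)"

definition pos_part :: "real \<Rightarrow> real" where "pos_part a = max a 0"
definition neg_part :: "real \<Rightarrow> real" where "neg_part a = max (- a) 0"

definition grad :: "(real^'n \<Rightarrow> real) \<Rightarrow> real^'n \<Rightarrow> real^'n" where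
  "grad f y = (\<chi> i. frechet_derivative f (at y) (axis i 1))"

definition twice_differentiable_at :: "(real^'n \<Rightarrow> real) \<Rightarrow> real^'n \<Rightarrow> bool" where
  "twice_differentiable_at f x \<longleftrightarrow>
     (\<forall>\<^sub>F y in nhds x. f differentiable (at y)) \<and> grad f differentiable (at x)"

definition hessian :: "(real^'n \<Rightarrow> real) \<Rightarrow> real^'n \<Rightarrow> real^'n^'n" where
  "hessian f x = matrix (frechet_derivative (grad f) (at x))"

definition time_deriv :: "(real \<Rightarrow> real^'n \<Rightarrow> real) \<Rightarrow> real \<Rightarrow> real^'n \<Rightarrow> real" where
  "time_deriv u t x = deriv (\<lambda>s. u s x) t"

definition space_hessian :: "(real \<Rightarrow> real^'n \<Rightarrow> real) \<Rightarrow> real \<Rightarrow> real^'n \<Rightarrow> real^'n^'n" where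
  "space_hessian u t x = hessian (\<lambda>y. u t y) x"

end

theory Submission
  imports Defs
begin


definition dg :: "real^'n \<Rightarrow> real^'n^'n" where
  "dg d = (\<chi> i j. if i = j then d$i else 0)"

lemma sym_dot: "sym_mat M \<Longrightarrow> x \<bullet> (M *v y) = (M *v x) \<bullet> y"
  unfolding sym_mat_def
  by (metis dot_lmul_matrix transpose_matrix_vector)

lemma quad_le_max:
  fixes M :: "real^'n^'n"
  assumes V: "subspace V" and x: "x \<in> V" "norm x = 1"
    and mx: "\<And>y. y \<in> V \<Longrightarrow> norm y = 1 \<Longrightarrow> y \<bullet> (M *v y) \<le> x \<bullet> (M *v x)"
    and z: "z \<in> V"
  shows "z \<bullet> (M *v z) \<le> (x \<bullet> (M *v x)) * (z \<bullet> z)"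
proof (cases "z = 0")
  case True then show ?thesis by simp
next
  case False
  let ?n = "norm z"
  have n: "?n > 0" using False by simp
  have "(z /\<^sub>R ?n) \<in> V" using V z by (simp add: subspace_scale)
  moreover have "norm (z /\<^sub>R ?n) = 1" using n by simp
  ultimately have "(z /\<^sub>R ?n) \<bullet> (M *v (z /\<^sub>R ?n)) \<le> x \<bullet> (M *v x)" by (rule mx)
  moreover have "(z /\<^sub>R ?n) \<bullet> (M *v (z /\<^sub>R ?n)) = (z \<bullet> (M *v z)) / (?n * ?n)"
    by (simp add: matrix_vector_mult_scaleR inner_scaleR_left inner_scaleR_right field_simps)
  moreover have "z \<bullet> z = ?n * ?n" by (simp add: dot_square_norm power2_eq_square)
  ultimately show ?thesis using n by (simp add: divide_le_eq mult.commute)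
qed

lemma quad_bound_zero:
  fixes b c :: real
  assumes "\<And>t. 2 * t * b + t * t * c \<le> 0"
  shows "b = 0"
proof (rule ccontr)
  assume b: "b \<noteq> 0"
  define s where "s = 1 / (\<bar>c\<bar> + 1)"
  have s0: "s > 0" using s_def by (simp add: add_nonneg_pos)
  have "s * (\<bar>c\<bar> + 1) = 1" using s_def by simp
  hence s: "s > 0" "s * \<bar>c\<bar> < 1" using s0 by (auto simp: algebra_simps)
  have "2 * (s*b) * b + (s*b) * (s*b) * c \<le> 0" by (rule assms)
  hence "(b*b) * (2 + s * c) * s \<le> 0" by (simp add: algebra_simps)
  moreover have "b*b > 0" by (metis b not_real_square_gt_zero)
  moreover have "2 + s*c > 0" using s abs_ge_minus_self[of c]
  proof -
    have "- (s * c) \<le> s * \<bar>c\<bar>" using mult_left_mono[OF abs_ge_minus_self[of c] less_imp_le[OF s(1)]] by simp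
    thus ?thesis using s(2) by linarith
  qed
  ultimately have "(b*b) * (2 + s * c) * s > 0" using s by simp
  thus False using \<open>(b*b) * (2 + s * c) * s \<le> 0\<close> by linarith
qed

lemma exists_eigvec:
  fixes M :: "real^'n^'n"
  assumes sym: "sym_mat M" and V: "subspace V" and inv: "\<And>x. x \<in> V \<Longrightarrow> M *v x \<in> V"
    and ne: "\<not> V \<subseteq> {0}"
  obtains x c where "x \<in> V" "norm x = 1" "M *v x = c *\<^sub>R x"
proof -
  let ?K = "V \<inter> sphere 0 1"
  have c1: "compact ?K"
    by (metis V closed_subspace compact_sphere closed_Int_compact)
  have c2: "?K \<noteq> {}"
  proof -
    obtain v where v: "v \<in> V" "v \<noteq> 0" using ne by auto
    have "v /\<^sub>R norm v \<in> ?K" using v V by (simp add: subspace_scale)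
    thus ?thesis by blast
  qed
  have c3: "continuous_on ?K (\<lambda>y. y \<bullet> (M *v y))"
    by (intro continuous_on_inner continuous_on_id matrix_vector_mult_linear_continuous_on)
  obtain x where x: "x \<in> ?K" and mx: "\<And>y. y \<in> ?K \<Longrightarrow> y \<bullet> (M *v y) \<le> x \<bullet> (M *v x)"
    using continuous_attains_sup[OF c1 c2 c3] by blast
  have xV: "x \<in> V" and nx: "norm x = 1" using x by auto
  let ?m = "x \<bullet> (M *v x)"
  have xx: "x \<bullet> x = 1" using nx by (simp add: dot_square_norm)
  have orth: "y \<bullet> (M *v x) = 0" if y: "y \<in> V" "y \<bullet> x = 0" for y
  proof -
    have "2 * t * (y \<bullet> (M *v x)) + t * t * (y \<bullet> (M *v y) - ?m * (y \<bullet> y)) \<le> 0" for t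
    proof -
      have zV: "x + t *\<^sub>R y \<in> V" using xV y V by (simp add: subspace_add subspace_scale)
      have le: "(x + t *\<^sub>R y) \<bullet> (M *v (x + t *\<^sub>R y)) \<le> ?m * ((x + t *\<^sub>R y) \<bullet> (x + t *\<^sub>R y))"
        by (rule quad_le_max[OF V xV nx _ zV]) (use mx in auto)
      have sd: "x \<bullet> (M *v y) = y \<bullet> (M *v x)"
        using sym_dot[OF sym, of x y] by (simp add: inner_commute)
      have A: "(x + t *\<^sub>R y) \<bullet> (M *v (x + t *\<^sub>R y)) = ?m + 2 * t * (y \<bullet> (M *v x)) + t*t*(y \<bullet> (M *v y))"
        by (simp add: matrix_vector_right_distrib matrix_vector_mult_scaleR inner_add_left inner_add_right sd
            algebra_simps)
      have B: "(x + t *\<^sub>R y) \<bullet> (x + t *\<^sub>R y) = 1 + t*t*(y \<bullet> y)"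
        using y(2) xx by (simp add: inner_add_left inner_add_right inner_commute[of x y] algebra_simps)
      have le2: "?m + 2 * t * (y \<bullet> (M *v x)) + t*t*(y \<bullet> (M *v y)) \<le> ?m * (1 + t*t*(y \<bullet> y))"
        using le unfolding A B .
      have e1: "?m * (1 + t*t*(y \<bullet> y)) = ?m + t*t*(?m*(y \<bullet> y))" by (simp add: algebra_simps)
      have e2: "t * t * (y \<bullet> (M *v y) - ?m * (y \<bullet> y)) = t*t*(y \<bullet> (M *v y)) - t*t*(?m*(y \<bullet> y))"
        by (simp add: algebra_simps)
      show ?thesis using le2 e1 e2 by linarith
    qed
    thus ?thesis by (rule quad_bound_zero)
  qed
  define w where "w = M *v x - ?m *\<^sub>R x"
  have wV: "w \<in> V" unfolding w_def using inv[OF xV] xV V by (simp add: subspace_diff subspace_scale)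
  have "w \<bullet> x = 0" unfolding w_def using xx by (simp add: inner_diff_left inner_commute[of "M *v x" x])
  hence "w \<bullet> (M *v x) = 0" using orth wV by blast
  moreover have "w \<bullet> w = w \<bullet> (M *v x) - ?m * (w \<bullet> x)"
    by (subst (2) w_def) (simp add: inner_diff_right)
  ultimately have "w \<bullet> w = 0" using \<open>w \<bullet> x = 0\<close> by simp
  hence "M *v x = ?m *\<^sub>R x" unfolding w_def by simp
  thus ?thesis using that xV nx by blast
qed

lemma eig_subspace:
  fixes M :: "real^'n^'n"
  assumes sym: "sym_mat M"
  shows "subspace V \<Longrightarrow> (\<And>x. x \<in> V \<Longrightarrow> M *v x \<in> V) \<Longrightarrow>
    \<exists>S. S \<subseteq> V \<and> pairwise orthogonal S \<and> (\<forall>x\<in>S. norm x = 1) \<and> span S = V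
       \<and> (\<forall>x\<in>S. \<exists>c. M *v x = c *\<^sub>R x)"
proof (induction "dim V" arbitrary: V rule: less_induct)
  case less
  show ?case
  proof (cases "V \<subseteq> {0}")
    case True
    hence "V = {0}" using less.prems(1) subspace_0 by blast
    thus ?thesis by (intro exI[of _ "{}"]) auto
  next
    case False
    obtain x c where x: "x \<in> V" "norm x = 1" "M *v x = c *\<^sub>R x"
      using exists_eigvec[OF sym less.prems(1) _ False] less.prems(2) by blast
    have xx: "x \<bullet> x = 1" using x(2) by (simp add: dot_square_norm)
    define V' where "V' = {y \<in> V. x \<bullet> y = 0}"
    have sV': "subspace V'" unfolding V'_def subspace_def using less.prems(1)
      by (auto simp: subspace_def inner_add_right)
    have inv': "M *v y \<in> V'" if "y \<in> V'" for y
    proof -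
      have "x \<bullet> (M *v y) = (M *v x) \<bullet> y" by (rule sym_dot[OF sym])
      also have "\<dots> = 0" using that x(3) by (simp add: V'_def)
      finally show ?thesis using that less.prems(2) by (simp add: V'_def)
    qed
    have "span V' \<subset> span V"
    proof -
      have "V' \<subseteq> V" by (auto simp: V'_def)
      moreover have "x \<notin> V'" using xx by (simp add: V'_def)
      moreover have e1: "span V' = V'" using sV' by (simp add: span_eq_iff)
      moreover have e2: "span V = V" using less.prems(1) by (simp add: span_eq_iff)
      ultimately show ?thesis unfolding e1 e2 using x(1) by blast
    qed
    hence "dim V' < dim V" by (rule dim_psubset)
    then obtain S' where S': "S' \<subseteq> V'" "pairwise orthogonal S'" "\<forall>x\<in>S'. norm x = 1" "span S' = V'"
      "\<forall>x\<in>S'. \<exists>c. M *v x = c *\<^sub>R x"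
      using less.hyps[OF _ sV' inv'] by blast
    show ?thesis
    proof (intro exI[of _ "insert x S'"] conjI)
      show "insert x S' \<subseteq> V" using S'(1) x(1) by (auto simp: V'_def)
      show "pairwise orthogonal (insert x S')"
      proof -
        have "orthogonal x y \<and> orthogonal y x" if "y \<in> S'" for y
          using S'(1) that by (auto simp: V'_def orthogonal_def inner_commute[of y x])
        thus ?thesis using S'(2) by (simp add: pairwise_insert)
      qed
      show "\<forall>x\<in>insert x S'. norm x = 1" using S'(3) x(2) by auto
      show "\<forall>y\<in>insert x S'. \<exists>c. M *v y = c *\<^sub>R y" using S'(5) x(3) by auto
      show "span (insert x S') = V"
      proof
        show "span (insert x S') \<subseteq> V"
          using \<open>insert x S' \<subseteq> V\<close> less.prems(1) by (simp add: span_minimal)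
        show "V \<subseteq> span (insert x S')"
        proof
          fix y assume y: "y \<in> V"
          have "y - (x \<bullet> y) *\<^sub>R x \<in> V'" using y x(1) xx less.prems(1)
            by (simp add: V'_def subspace_diff subspace_scale inner_diff_right)
          hence "y - (x \<bullet> y) *\<^sub>R x \<in> span (insert x S')" using S'(4)
            using span_mono[of S' "insert x S'"] by blast
          moreover have "(x \<bullet> y) *\<^sub>R x \<in> span (insert x S')"
            by (simp add: span_base span_scale)
          ultimately have "(y - (x \<bullet> y) *\<^sub>R x) + (x \<bullet> y) *\<^sub>R x \<in> span (insert x S')"
            by (rule span_add)
          thus "y \<in> span (insert x S')" by simp
        qed
      qed
    qed
  qed
qed

lemma spectral:
  fixes M :: "real^'n^'n"
  assumes sym: "sym_mat M"
  obtains U d where "orthogonal_matrix U" "M = U ** dg d ** transpose U"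
proof -
  obtain S where S: "pairwise orthogonal S" "\<forall>x\<in>S. norm x = 1" "span S = UNIV"
       "\<forall>x\<in>S. \<exists>c. M *v x = c *\<^sub>R x"
    using eig_subspace[OF sym, of UNIV] by auto
  have "0 \<notin> S" using S(2) by force
  hence ind: "independent S" using S(1) pairwise_orthogonal_independent by blast
  have "card S = CARD('n)"
    using dim_eq_card_independent[OF ind] S(3) dim_span[of S] by simp
  moreover have "finite S" using ind finiteI_independent by blast
  ultimately have "\<exists>h. bij_betw h (UNIV::'n set) S"
    using finite_same_card_bij[of "UNIV::'n set" S] by simp
  then obtain f where f: "bij_betw f (UNIV::'n set) S" by blast
  hence fS: "f i \<in> S" for i using bij_betwE by blast
  have [simp]: "norm (f i) = 1" for i using fS S(2) by blast
  have [simp]: "i \<noteq> j \<Longrightarrow> orthogonal (f i) (f j)" for i j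
    using S(1) f by (auto simp: pairwise_def bij_betw_def inj_on_def)
  define U where "U = (\<chi> i j. f j $ i)"
  have oU: "orthogonal_matrix U"
    unfolding U_def by (simp add: orthogonal_matrix_orthonormal_columns column_def)
  define d where "d = (\<chi> j. SOME c. M *v f j = c *\<^sub>R f j)"
  have ev: "M *v f j = (d $ j) *\<^sub>R f j" for j
  proof -
    have "\<exists>c. M *v f j = c *\<^sub>R f j" using S(4) fS[of j] by blast
    from someI_ex[OF this] show ?thesis unfolding d_def by simp
  qed
  have MU: "M ** U = U ** dg d"
  proof -
    have "(M ** U) $ i $ j = (U ** dg d) $ i $ j" for i j
    proof -
      have "(M ** U) $ i $ j = (M *v f j) $ i"
        unfolding matrix_matrix_mult_def matrix_vector_mult_def U_def by simp
      also have "\<dots> = d $ j * f j $ i" using ev by simp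
      also have "\<dots> = (U ** dg d) $ i $ j"
        unfolding matrix_matrix_mult_def dg_def U_def
        by (simp add: mult.commute if_distrib[of "\<lambda>z. _ * z"] sum.delta cong: if_cong)
      finally show ?thesis .
    qed
    thus ?thesis by (metis vec_eq_iff)
  qed
  have "M = M ** (U ** transpose U)" using oU by (simp add: orthogonal_matrix_def matrix_mul_rid)
  also have "\<dots> = (M ** U) ** transpose U" by (rule matrix_mul_assoc)
  also have "\<dots> = U ** dg d ** transpose U" by (simp only: MU)
  finally show ?thesis using that oU by blast
qed




definition pp :: "real^'n \<Rightarrow> real^'n" where "pp d = (\<chi> i. max (d$i) 0)"
definition nn :: "real^'n \<Rightarrow> real^'n" where "nn d = (\<chi> i. max (- d$i) 0)"

lemma dg_diff: "dg a - dg b = dg (a - b)"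
  by (simp add: dg_def vec_eq_iff)

lemma dg_mult: "dg a ** dg b = dg (\<chi> i. a$i * b$i)"
  unfolding dg_def matrix_matrix_mult_def
  by (simp add: vec_eq_iff if_distrib[of "\<lambda>z. _ * z"] sum.delta cong: if_cong)

lemma dg_zero: "dg 0 = mat 0"
  by (simp add: dg_def mat_def vec_eq_iff)

lemma transpose_dg [simp]: "transpose (dg a) = dg a"
  by (simp add: dg_def transpose_def vec_eq_iff)

lemma pp_nn: "pp d - nn d = d" by (simp add: pp_def nn_def vec_eq_iff max_def)

lemma orthD: "orthogonal_matrix U \<Longrightarrow> transpose U ** U = mat 1 \<and> U ** transpose U = mat 1"
  by (simp add: orthogonal_matrix_def)

lemma sym_conj: "sym_mat ((U::real^'n^'n) ** dg a ** transpose U)"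
  unfolding sym_mat_def by (simp only: matrix_transpose_mul transpose_transpose transpose_dg matrix_mul_assoc)

lemma dot_mv_transpose: "x \<bullet> ((U::real^'n^'m) *v z) = (transpose U *v x) \<bullet> z"
  by (simp only: transpose_matrix_vector dot_lmul_matrix)

lemma dg_mv: "dg a *v w = (\<chi> i. a$i * w$i)"
  unfolding dg_def matrix_vector_mult_def
  by (simp add: vec_eq_iff if_distrib[of "\<lambda>z. z * _"] sum.delta cong: if_cong)

lemma dg_quad: "w \<bullet> (dg a *v w) = (\<Sum>j\<in>UNIV. a$j * (w$j)^2)"
  unfolding dg_mv inner_vec_def
  by (simp add: power2_eq_square mult_ac)

lemma conj_quad: "x \<bullet> (((U::real^'n^'n) ** dg a ** transpose U) *v x) = (\<Sum>j\<in>UNIV. a$j * ((transpose U *v x)$j)^2)"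
proof -
  have "x \<bullet> ((U ** dg a ** transpose U) *v x) = x \<bullet> (U *v (dg a *v (transpose U *v x)))"
    by (simp only: matrix_vector_mul_assoc matrix_mul_assoc)
  also have "\<dots> = (transpose U *v x) \<bullet> (dg a *v (transpose U *v x))"
    by (rule dot_mv_transpose)
  also have "\<dots> = (\<Sum>j\<in>UNIV. a$j * ((transpose U *v x)$j)^2)" by (rule dg_quad)
  finally show ?thesis .
qed

lemma psd_conj: "(\<And>j. a$j \<ge> 0) \<Longrightarrow> psd ((U::real^'n^'n) ** dg a ** transpose U)"
  unfolding psd_def using sym_conj conj_quad
  by (metis (no_types, lifting) mult_nonneg_nonneg sum_nonneg zero_le_power2)

lemma trace_dg: "trace (dg a) = sum (\<lambda>j. a$j) UNIV"
  by (simp add: trace_def dg_def)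

lemma trace_conj: "orthogonal_matrix (U::real^'n^'n) \<Longrightarrow> trace (U ** dg a ** transpose U) = sum (\<lambda>j. a$j) UNIV"
proof -
  assume "orthogonal_matrix U"
  hence "transpose U ** U = mat 1" by (simp add: orthD)
  moreover have "trace ((U ** dg a) ** transpose U) = trace (transpose U ** (U ** dg a))"
    by (rule trace_mul_sym)
  ultimately show ?thesis by (simp add: matrix_mul_assoc trace_dg)
qed

lemma mult_conj: "orthogonal_matrix (U::real^'n^'n) \<Longrightarrow>
   (U ** dg a ** transpose U) ** (U ** dg b ** transpose U) = U ** dg (\<chi> i. a$i * b$i) ** transpose U"
proof -
  assume "orthogonal_matrix U"
  hence o: "transpose U ** U = mat 1" by (simp add: orthD)
  have "(U ** dg a ** transpose U) ** (U ** dg b ** transpose U)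
      = U ** dg a ** (transpose U ** U) ** dg b ** transpose U"
    by (simp add: matrix_mul_assoc)
  also have "\<dots> = U ** (dg a ** dg b) ** transpose U" by (simp add: o matrix_mul_assoc)
  finally show ?thesis by (simp add: dg_mult)
qed

lemma diff_conj: fixes U :: "real^'n^'n" shows "(U ** dg a ** transpose U) - (U ** dg b ** transpose U) = U ** dg (a - b) ** transpose U"
proof -
  have l1: "\<And>A B C :: real^'n^'n. A ** (B - C) = A ** B - A ** C"
    by (simp add: matrix_matrix_mult_def vec_eq_iff algebra_simps sum_subtractf)
  have l2: "\<And>A B C :: real^'n^'n. (B - C) ** A = B ** A - C ** A"
    by (simp add: matrix_matrix_mult_def vec_eq_iff algebra_simps sum_subtractf)
  have "U ** dg (a - b) ** transpose U = U ** (dg a - dg b) ** transpose U" by (simp add: dg_diff)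
  also have "\<dots> = (U ** dg a ** transpose U) - (U ** dg b ** transpose U)" by (simp only: l1 l2)
  finally show ?thesis by simp
qed

lemma transpose_sym: "sym_mat A \<Longrightarrow> transpose A = A" by (simp add: sym_mat_def)

lemma eig_pos_part:
  fixes M P Q :: "real^'n^'n"
  assumes pn: "pn_decomp M P Q" and ev: "M *v v = \<mu> *\<^sub>R v"
  shows "P *v v = max \<mu> 0 *\<^sub>R v"
proof -
  have pP: "psd P" and pQ: "psd Q" and MPQ: "M = P - Q" and PQ: "P ** Q = mat 0"
    using pn by (auto simp: pn_decomp_def)
  have sP: "sym_mat P" and sQ: "sym_mat Q" using pP pQ by (auto simp: psd_def)
  have QP: "Q ** P = mat 0"
  proof -
    have "transpose (P ** Q) = transpose (mat 0 :: real^'n^'n)" using PQ by simp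
    thus ?thesis using sP sQ by (simp add: matrix_transpose_mul sym_mat_def transpose_mat[of 0, unfolded mat_0])
  qed
  have PQz: "P *v (Q *v z) = 0" for z using PQ by (simp add: matrix_vector_mul_assoc)
  have QPz: "Q *v (P *v z) = 0" for z using QP by (simp add: matrix_vector_mul_assoc)
  have MPv: "M *v (P *v z) = P *v (P *v z)" for z
    using QPz[of z] by (simp add: MPQ matrix_vector_mult_diff_rdistrib)
  have PMv: "P *v (M *v z) = P *v (P *v z)" for z
    using PQz[of z] by (simp add: MPQ matrix_vector_mult_diff_distrib matrix_vector_mult_diff_rdistrib)
  have key: "M *v (P *v v) = \<mu> *\<^sub>R (P *v v)"
    using MPv[of v] PMv[of v] ev by (simp add: matrix_vector_mult_scaleR)
  show ?thesis
  proof (cases "\<mu> > 0")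
    case True
    define w where "w = P *v v - \<mu> *\<^sub>R v"
    have Pw: "P *v w = 0"
      unfolding w_def using MPv[of v] key
      by (simp add: matrix_vector_mult_diff_distrib matrix_vector_mult_scaleR)
    have Mw: "M *v w = \<mu> *\<^sub>R w"
      unfolding w_def using key ev
      by (simp add: matrix_vector_mult_diff_distrib matrix_vector_mult_scaleR algebra_simps)
    have Qw: "Q *v w = - \<mu> *\<^sub>R w"
    proof -
      have "Q = P - M" using MPQ by simp
      hence "Q *v w = P *v w - M *v w" by (simp add: matrix_vector_mult_diff_rdistrib)
      thus ?thesis using Pw Mw by simp
    qed
    have "0 \<le> w \<bullet> (Q *v w)" using pQ by (simp add: psd_def)
    hence "\<mu> * (w \<bullet> w) \<le> 0" using Qw by simp
    hence "w \<bullet> w \<le> 0" using True by (simp add: mult_le_0_iff)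
    hence "w \<bullet> w = 0" using inner_ge_zero[of w] by linarith
    hence "w = 0" by simp
    thus ?thesis using True unfolding w_def by simp
  next
    case False
    define w where "w = P *v v"
    have Pw: "P *v w = \<mu> *\<^sub>R w"
    proof -
      have "P = M + Q" using MPQ by simp
      hence "P *v w = M *v w + Q *v w" by (simp add: matrix_vector_mult_add_rdistrib)
      thus ?thesis using key QPz[of v] unfolding w_def by simp
    qed
    have "w \<bullet> w = v \<bullet> (P *v w)" unfolding w_def using sym_dot[OF sP, of v w] by (simp add: w_def)
    also have "\<dots> = \<mu> * (v \<bullet> w)" using Pw by simp
    finally have ww: "w \<bullet> w = \<mu> * (v \<bullet> (P *v v))" by (simp add: w_def)
    have "0 \<le> v \<bullet> (P *v v)" using pP by (simp add: psd_def)
    hence "\<mu> * (v \<bullet> (P *v v)) \<le> 0" using False by (simp add: mult_le_0_iff)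
    hence "w \<bullet> w = 0" using ww inner_ge_zero[of w] by linarith
    hence "w = 0" by simp
    thus ?thesis using False unfolding w_def by simp
  qed
qed

lemma col_eig:
  assumes "orthogonal_matrix (U::real^'n^'n)"
  shows "(U ** dg d ** transpose U) *v (U *v axis j 1) = d$j *\<^sub>R (U *v axis j 1)"
proof -
  have o: "transpose U ** U = mat 1" using assms by (simp add: orthD)
  have "(U ** dg d ** transpose U) *v (U *v axis j 1) = U *v (dg d *v ((transpose U ** U) *v axis j 1))"
    by (simp only: matrix_vector_mul_assoc matrix_mul_assoc)
  also have "\<dots> = U *v (dg d *v axis j 1)" by (simp add: o)
  also have "dg d *v axis j 1 = d$j *\<^sub>R axis j 1"
    unfolding dg_def matrix_vector_mult_def axis_def
    by (simp add: vec_eq_iff if_distrib[of "\<lambda>z. _ * z"] sum.delta cong: if_cong)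
  finally show ?thesis by (simp add: matrix_vector_mult_scaleR)
qed

lemma mat_eq_axis:
  fixes A B :: "real^'n^'m"
  assumes "\<And>j. A *v axis j 1 = B *v axis j 1"
  shows "A = B"
proof -
  have "A$i$j = B$i$j" for i j
  proof -
    have "column j A = column j B" using assms[of j] by (simp only: matrix_vector_mult_basis)
    thus ?thesis by (simp add: column_def vec_eq_iff)
  qed
  thus ?thesis by (simp add: vec_eq_iff)
qed

lemma pn_unique_P:
  fixes M P Q :: "real^'n^'n"
  assumes U: "orthogonal_matrix U" and M: "M = U ** dg d ** transpose U"
    and pn: "pn_decomp M P Q"
  shows "P = U ** dg (pp d) ** transpose U"
proof -
  have o: "U ** transpose U = mat 1" using U by (simp add: orthD)
  have "P ** U = (U ** dg (pp d) ** transpose U) ** U"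
  proof -
    have "(P ** U) *v axis j 1 = ((U ** dg (pp d) ** transpose U) ** U) *v axis j 1" for j
    proof -
      have "(P ** U) *v axis j 1 = P *v (U *v axis j 1)" by (simp add: matrix_vector_mul_assoc)
      also have "\<dots> = max (d$j) 0 *\<^sub>R (U *v axis j 1)"
        by (rule eig_pos_part[OF pn]) (simp add: M col_eig[OF U])
      also have "\<dots> = (pp d)$j *\<^sub>R (U *v axis j 1)" by (simp add: pp_def)
      also have "\<dots> = (U ** dg (pp d) ** transpose U) *v (U *v axis j 1)"
        by (simp add: col_eig[OF U])
      finally show ?thesis by (simp add: matrix_vector_mul_assoc)
    qed
    thus ?thesis by (rule mat_eq_axis)
  qed
  hence "P ** U ** transpose U = (U ** dg (pp d) ** transpose U) ** U ** transpose U" by simp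
  thus ?thesis by (simp add: o flip: matrix_mul_assoc)
qed

lemma pn_exists:
  assumes U: "orthogonal_matrix (U::real^'n^'n)"
  shows "pn_decomp (U ** dg d ** transpose U) (U ** dg (pp d) ** transpose U) (U ** dg (nn d) ** transpose U)"
  unfolding pn_decomp_def
proof (intro conjI)
  show "psd (U ** dg (pp d) ** transpose U)" by (rule psd_conj) (simp add: pp_def)
  show "psd (U ** dg (nn d) ** transpose U)" by (rule psd_conj) (simp add: nn_def)
  show "U ** dg d ** transpose U = U ** dg (pp d) ** transpose U - U ** dg (nn d) ** transpose U"
    by (simp add: diff_conj pp_nn)
  have "(\<chi> i. pp d $ i * nn d $ i) = 0" by (simp add: pp_def nn_def vec_eq_iff max_def)
  thus "(U ** dg (pp d) ** transpose U) ** (U ** dg (nn d) ** transpose U) = mat 0"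
    by (simp add: mult_conj[OF U] dg_zero[unfolded mat_0])
qed

lemma mat_pos_neg:
  fixes M :: "real^'n^'n"
  assumes U: "orthogonal_matrix U" and M: "M = U ** dg d ** transpose U"
  shows "mat_pos M = U ** dg (pp d) ** transpose U" "mat_neg M = U ** dg (nn d) ** transpose U"
proof -
  let ?P = "U ** dg (pp d) ** transpose U" and ?Q = "U ** dg (nn d) ** transpose U"
  have ex: "pn_decomp M ?P ?Q" using pn_exists[OF U] M by simp
  show "mat_pos M = ?P" unfolding mat_pos_def
  proof (rule the_equality)
    show "\<exists>Q. pn_decomp M ?P Q" using ex by blast
    show "\<And>P. \<exists>Q. pn_decomp M P Q \<Longrightarrow> P = ?P" using pn_unique_P[OF U M] by blast
  qed
  show "mat_neg M = ?Q" unfolding mat_neg_def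
  proof (rule the_equality)
    show "\<exists>P. pn_decomp M P ?Q" using ex by blast
    fix Q assume "\<exists>P. pn_decomp M P Q"
    then obtain P where pn: "pn_decomp M P Q" by blast
    hence "P = ?P" by (rule pn_unique_P[OF U M])
    moreover have "M = P - Q" "M = ?P - ?Q" using pn ex by (auto simp: pn_decomp_def)
    ultimately have "Q = P - M" "?Q = ?P - M" by (simp_all add: algebra_simps)
    thus "Q = ?Q" using \<open>P = ?P\<close> by simp
  qed
qed

lemma mat_pn_decomp:
  fixes M :: "real^'n^'n"
  assumes "sym_mat M"
  shows "pn_decomp M (mat_pos M) (mat_neg M)"
proof -
  obtain U d where U: "orthogonal_matrix U" and M: "M = U ** dg d ** transpose U"
    using spectral[OF assms] by blast
  show ?thesis using mat_pos_neg[OF U M] pn_exists[OF U] M by simp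
qed

lemma psd_trace_nonneg: "psd P \<Longrightarrow> 0 \<le> trace P"
proof -
  assume "psd P"
  have "0 \<le> P$i$i" for i
  proof -
    have "0 \<le> axis i 1 \<bullet> (P *v axis i 1)" using \<open>psd P\<close> by (simp add: psd_def)
    moreover have "axis i 1 \<bullet> (P *v axis i 1) = P$i$i"
      by (simp only: inner_axis' matrix_vector_mult_basis) (simp add: column_def)
    ultimately show ?thesis by simp
  qed
  thus ?thesis unfolding trace_def by (simp add: sum_nonneg)
qed




definition adm :: "real^'n^'n \<Rightarrow> bool" where
  "adm A \<longleftrightarrow> (\<forall>x. 0 \<le> x \<bullet> (A *v x) \<and> x \<bullet> (A *v x) \<le> x \<bullet> x)"

lemma trace_dg_right: "trace (B ** dg a) = (\<Sum>j\<in>UNIV. B$j$j * a$j)"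
  unfolding trace_def dg_def matrix_matrix_mult_def
  by (simp add: if_distrib[of "\<lambda>z. _ * z"] sum.delta cong: if_cong)

lemma diag_as_quad: "(B::real^'n^'n)$j$j = axis j 1 \<bullet> (B *v axis j 1)"
  by (simp only: inner_axis' matrix_vector_mult_basis) (simp add: column_def)

lemma unit_col: "orthogonal_matrix (U::real^'n^'n) \<Longrightarrow> (U *v axis j 1) \<bullet> (U *v axis j 1) = 1"
proof -
  assume "orthogonal_matrix U"
  hence o: "transpose U ** U = mat 1" by (simp add: orthD)
  have "(U *v axis j 1) \<bullet> (U *v axis j 1) = (transpose U *v (U *v axis j 1)) \<bullet> axis j 1"
    by (rule dot_mv_transpose)
  also have "\<dots> = axis j 1 \<bullet> (axis j (1::real))" by (simp only: matrix_vector_mul_assoc o matrix_vector_mul_lid)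
  finally show ?thesis by (simp add: inner_axis_axis)
qed

lemma TR:
  fixes U A :: "real^'n^'n"
  assumes U: "orthogonal_matrix U"
  shows "trace (A ** (U ** dg a ** transpose U))
     = (\<Sum>j\<in>UNIV. a$j * ((U *v axis j 1) \<bullet> (A *v (U *v axis j 1))))"
proof -
  let ?B = "transpose U ** A ** U"
  have "trace (A ** (U ** dg a ** transpose U)) = trace ((A ** U ** dg a) ** transpose U)"
    by (simp only: matrix_mul_assoc)
  also have "\<dots> = trace (transpose U ** (A ** U ** dg a))" by (rule trace_mul_sym)
  also have "\<dots> = trace (?B ** dg a)" by (simp only: matrix_mul_assoc)
  also have "\<dots> = (\<Sum>j\<in>UNIV. ?B$j$j * a$j)" by (rule trace_dg_right)
  also have "\<dots> = (\<Sum>j\<in>UNIV. a$j * ((U *v axis j 1) \<bullet> (A *v (U *v axis j 1))))"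
  proof (rule sum.cong[OF refl])
    fix j
    have "?B$j$j = axis j 1 \<bullet> (transpose U *v (A *v (U *v axis j 1)))"
      by (simp only: diag_as_quad matrix_vector_mul_assoc matrix_mul_assoc)
    also have "\<dots> = (U *v axis j 1) \<bullet> (A *v (U *v axis j 1))"
      using dot_mv_transpose[of "axis j 1" "transpose U" "A *v (U *v axis j 1)"] by simp
    finally show "?B$j$j * a$j = a$j * ((U *v axis j 1) \<bullet> (A *v (U *v axis j 1)))" by simp
  qed
  finally show ?thesis .
qed

lemma adm_col:
  assumes U: "orthogonal_matrix (U::real^'n^'n)" and A: "adm A"
  shows "0 \<le> (U *v axis j 1) \<bullet> (A *v (U *v axis j 1))" "(U *v axis j 1) \<bullet> (A *v (U *v axis j 1)) \<le> 1"
  using A unit_col[OF U, of j] unfolding adm_def by metis+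

lemma phi_trace: "orthogonal_matrix (U::real^'n^'n) \<Longrightarrow> M = U ** dg d ** transpose U \<Longrightarrow>
   trace (mat_pos M) = (\<Sum>j\<in>UNIV. max (d$j) 0)"
proof -
  assume U: "orthogonal_matrix (U::real^'n^'n)" and M: "M = U ** dg d ** transpose U"
  have "mat_pos M = U ** dg (pp d) ** transpose U" by (rule mat_pos_neg(1)[OF U M])
  thus ?thesis by (simp add: trace_conj[OF U] pp_def)
qed

lemma phi_upper:
  fixes M A :: "real^'n^'n"
  assumes sym: "sym_mat M" and A: "adm A"
  shows "trace (A ** M) \<le> trace (mat_pos M)"
proof -
  obtain U d where U: "orthogonal_matrix U" and M: "M = U ** dg d ** transpose U"
    using spectral[OF sym] by blast
  have "trace (A ** M) = (\<Sum>j\<in>UNIV. d$j * ((U *v axis j 1) \<bullet> (A *v (U *v axis j 1))))"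
    using TR[OF U] M by simp
  also have "\<dots> \<le> (\<Sum>j\<in>UNIV. max (d$j) 0)"
  proof (rule sum_mono)
    fix j
    let ?c = "(U *v axis j 1) \<bullet> (A *v (U *v axis j 1))"
    have "0 \<le> ?c" "?c \<le> 1" using adm_col[OF U A] by auto
    thus "d$j * ?c \<le> max (d$j) 0"
      by (cases "d$j \<ge> 0") (auto simp: mult_left_le mult_nonpos_nonneg)
  qed
  also have "\<dots> = trace (mat_pos M)" using phi_trace[OF U M] by simp
  finally show ?thesis .
qed

lemma sumsq_norm: "orthogonal_matrix (U::real^'n^'n) \<Longrightarrow> (\<Sum>j\<in>UNIV. ((transpose U *v x)$j)^2) = x \<bullet> x"
proof -
  assume "orthogonal_matrix U"
  hence o: "U ** transpose U = mat 1" by (simp add: orthD)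
  have "(\<Sum>j\<in>UNIV. ((transpose U *v x)$j)^2) = (transpose U *v x) \<bullet> (transpose U *v x)"
    by (simp add: inner_vec_def power2_eq_square)
  also have "\<dots> = x \<bullet> (U *v (transpose U *v x))" by (rule dot_mv_transpose[symmetric])
  also have "\<dots> = x \<bullet> x" by (simp only: matrix_vector_mul_assoc o matrix_vector_mul_lid)
  finally show ?thesis .
qed

lemma phi_attain:
  fixes M :: "real^'n^'n"
  assumes sym: "sym_mat M"
  shows "\<exists>A. adm A \<and> trace (A ** M) = trace (mat_pos M)"
proof -
  obtain U d where U: "orthogonal_matrix U" and M: "M = U ** dg d ** transpose U"
    using spectral[OF sym] by blast
  define e where "e = (\<chi> j. if d$j > 0 then 1 else (0::real))"
  define A where "A = U ** dg e ** transpose U"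
  have "adm A" unfolding adm_def
  proof
    fix x
    have q: "x \<bullet> (A *v x) = (\<Sum>j\<in>UNIV. e$j * ((transpose U *v x)$j)^2)"
      unfolding A_def by (rule conj_quad)
    have "0 \<le> (\<Sum>j\<in>UNIV. e$j * ((transpose U *v x)$j)^2)"
      by (rule sum_nonneg) (simp add: e_def)
    moreover have "(\<Sum>j\<in>UNIV. e$j * ((transpose U *v x)$j)^2) \<le> (\<Sum>j\<in>UNIV. ((transpose U *v x)$j)^2)"
      by (rule sum_mono) (simp add: e_def)
    ultimately show "0 \<le> x \<bullet> (A *v x) \<and> x \<bullet> (A *v x) \<le> x \<bullet> x"
      using q sumsq_norm[OF U, of x] by simp
  qed
  moreover have "trace (A ** M) = trace (mat_pos M)"
  proof -
    have "A ** M = U ** dg (\<chi> i. e$i * d$i) ** transpose U"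
      unfolding A_def M by (rule mult_conj[OF U])
    hence "trace (A ** M) = (\<Sum>j\<in>UNIV. e$j * d$j)" by (simp add: trace_conj[OF U])
    also have "\<dots> = (\<Sum>j\<in>UNIV. max (d$j) 0)" by (rule sum.cong) (auto simp: e_def max_def)
    finally show ?thesis using phi_trace[OF U M] by simp
  qed
  ultimately show ?thesis by blast
qed

lemma trace_adm_psd:
  fixes A B :: "real^'n^'n"
  assumes A: "adm A" and B: "psd B"
  shows "0 \<le> trace (A ** B)"
proof -
  have sym: "sym_mat B" using B by (simp add: psd_def)
  obtain U b where U: "orthogonal_matrix U" and Bd: "B = U ** dg b ** transpose U"
    using spectral[OF sym] by blast
  have b: "0 \<le> b$j" for j
  proof -
    have "0 \<le> (U *v axis j 1) \<bullet> (B *v (U *v axis j 1))" using B by (simp add: psd_def)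
    also have "\<dots> = b$j" using col_eig[OF U, of b j] unit_col[OF U, of j] Bd by simp
    finally show ?thesis .
  qed
  have "trace (A ** B) = (\<Sum>j\<in>UNIV. b$j * ((U *v axis j 1) \<bullet> (A *v (U *v axis j 1))))"
    using TR[OF U] Bd by simp
  also have "0 \<le> \<dots>" using adm_col(1)[OF U A] b by (simp add: sum_nonneg)
  finally show ?thesis by simp
qed

lemma adm_compl: "adm A \<Longrightarrow> adm (mat 1 - A)"
  unfolding adm_def by (simp add: matrix_vector_mult_diff_rdistrib inner_diff_right)

lemma mult_diff_left: "((B::real^'n^'n) - C) ** A = B ** A - C ** A"
  by (simp add: matrix_matrix_mult_def vec_eq_iff algebra_simps sum_subtractf)

lemma mult_add_right: "(A::real^'n^'n) ** (B + C) = A ** B + A ** C"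
  by (rule matrix_add_ldistrib)

lemma trace_adm_le: "adm A \<Longrightarrow> psd B \<Longrightarrow> trace (A ** B) \<le> trace (B::real^'n^'n)"
proof -
  assume "adm A" "psd B"
  hence "0 \<le> trace ((mat 1 - A) ** B)" using adm_compl trace_adm_psd by blast
  also have "trace ((mat 1 - A) ** B) = trace B - trace (A ** B)"
    by (simp add: mult_diff_left trace_sub)
  finally show ?thesis by simp
qed

lemma sym_add: "sym_mat A \<Longrightarrow> sym_mat B \<Longrightarrow> sym_mat (A + B)"
  by (simp add: sym_mat_def transpose_def vec_eq_iff)
lemma sym_diff: "sym_mat A \<Longrightarrow> sym_mat B \<Longrightarrow> sym_mat (A - B)"
  by (simp add: sym_mat_def transpose_def vec_eq_iff)

lemma phi_subadd:
  fixes X Y :: "real^'n^'n"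
  assumes "sym_mat X" "sym_mat Y"
  shows "trace (mat_pos (X + Y)) \<le> trace (mat_pos X) + trace (mat_pos Y)"
proof -
  obtain A where A: "adm A" "trace (A ** (X + Y)) = trace (mat_pos (X + Y))"
    using phi_attain[OF sym_add[OF assms]] by blast
  have "trace (A ** (X + Y)) = trace (A ** X) + trace (A ** Y)"
    by (simp add: mult_add_right trace_add)
  thus ?thesis using A phi_upper[OF assms(1) A(1)] phi_upper[OF assms(2) A(1)] by linarith
qed

lemma phi_mono:
  fixes Z B :: "real^'n^'n"
  assumes Z: "sym_mat Z" and B: "psd B"
  shows "trace (mat_pos Z) \<le> trace (mat_pos (Z + B))"
    "trace (mat_pos (Z + B)) \<le> trace (mat_pos Z) + trace B"
proof -
  have sB: "sym_mat B" using B by (simp add: psd_def)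
  have sZB: "sym_mat (Z + B)" by (rule sym_add[OF Z sB])
  obtain A where A: "adm A" "trace (A ** Z) = trace (mat_pos Z)"
    using phi_attain[OF Z] by blast
  have "trace (A ** (Z + B)) = trace (A ** Z) + trace (A ** B)"
    by (simp add: mult_add_right trace_add)
  thus "trace (mat_pos Z) \<le> trace (mat_pos (Z + B))"
    using A phi_upper[OF sZB A(1)] trace_adm_psd[OF A(1) B] by linarith
  obtain A' where A': "adm A'" "trace (A' ** (Z + B)) = trace (mat_pos (Z + B))"
    using phi_attain[OF sZB] by blast
  have "trace (A' ** (Z + B)) = trace (A' ** Z) + trace (A' ** B)"
    by (simp add: mult_add_right trace_add)
  thus "trace (mat_pos (Z + B)) \<le> trace (mat_pos Z) + trace B"
    using A' phi_upper[OF Z A'(1)] trace_adm_le[OF A'(1) B] by linarith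
qed

lemma phi_zero: "trace (mat_pos (0::real^'n^'n)) = 0"
proof -
  have s: "sym_mat (0::real^'n^'n)" by (simp add: sym_mat_def transpose_def vec_eq_iff)
  obtain A where "adm A" "trace (A ** (0::real^'n^'n)) = trace (mat_pos (0::real^'n^'n))"
    using phi_attain[OF s] by blast
  thus ?thesis by (simp add: trace_def)
qed

lemma phi_facts:
  fixes M :: "real^'n^'n"
  assumes "sym_mat M"
  shows "0 \<le> trace (mat_pos M)" "0 \<le> trace (mat_neg M)"
    "trace (mat_neg M) = trace (mat_pos M) - trace M"
proof -
  have pn: "pn_decomp M (mat_pos M) (mat_neg M)" by (rule mat_pn_decomp[OF assms])
  thus "0 \<le> trace (mat_pos M)" "0 \<le> trace (mat_neg M)"
    by (auto simp: pn_decomp_def psd_trace_nonneg)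
  have eq: "M = mat_pos M - mat_neg M" using pn by (simp add: pn_decomp_def)
  have "trace M = trace (mat_pos M - mat_neg M)" using eq by (rule arg_cong)
  moreover have "trace (mat_pos M - mat_neg M) = trace (mat_pos M) - trace (mat_neg M)" by (rule trace_sub)
  ultimately show "trace (mat_neg M) = trace (mat_pos M) - trace M" by linarith
qed




lemma deriv_line:
  fixes f :: "real^'n \<Rightarrow> real"
  assumes df: "(f has_derivative L) (at (a + s *\<^sub>R v))" and lin: "linear L"
  shows "((\<lambda>\<sigma>. f (a + \<sigma> *\<^sub>R v)) has_field_derivative L v) (at s within S)"
proof -
  have l: "((\<lambda>\<sigma>. a + \<sigma> *\<^sub>R v) has_derivative (\<lambda>\<sigma>. \<sigma> *\<^sub>R v)) (at s within S)"
    by (auto intro!: derivative_eq_intros)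
  have "((f \<circ> (\<lambda>\<sigma>. a + \<sigma> *\<^sub>R v)) has_derivative (L \<circ> (\<lambda>\<sigma>. \<sigma> *\<^sub>R v))) (at s within S)"
    by (rule diff_chain_within[OF l]) (rule has_derivative_at_withinI, simp add: df)
  moreover have "(L \<circ> (\<lambda>\<sigma>. \<sigma> *\<^sub>R v)) = (*) (L v)"
    by (rule ext) (simp add: linear_scale[OF lin])
  ultimately show ?thesis unfolding has_field_derivative_def comp_def by simp
qed

lemma mixed_approx:
  fixes f :: "real^'n \<Rightarrow> real"
  assumes r: "r > 0" and dif: "\<And>y. y \<in> ball x r \<Longrightarrow> f differentiable (at y)"
    and G': "(grad f has_derivative G') (at x)"
    and e: "e > 0"
  shows "\<exists>\<delta>>0. \<forall>t. 0 < t \<and> t < \<delta> \<longrightarrow>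
    \<bar>(f (x + t *\<^sub>R axis j 1 + t *\<^sub>R axis i 1) - f (x + t *\<^sub>R axis i 1) - f (x + t *\<^sub>R axis j 1) + f x)
       - t*t*(G' (axis j 1) $ i)\<bar> \<le> e * (t*t)"
proof -
  let ?G = "grad f"
  let ?c = "G' (axis j 1) $ i"
  have bl: "bounded_linear G'" using G' has_derivative_bounded_linear by blast
  then have linG: "linear G'" by (rule bounded_linear.linear)
  have e3: "e/3 > 0" using e by simp
  have "\<forall>e>0. \<exists>d>0. \<forall>y. norm(y - x) < d \<longrightarrow> norm (?G y - ?G x - G'(y - x)) \<le> e * norm (y - x)"
    using G' unfolding has_derivative_at_alt by blast
  from this[rule_format, OF e3] obtain d1 where d1: "d1 > 0" and
    app: "\<And>y. norm (y - x) < d1 \<Longrightarrow> norm (?G y - ?G x - G' (y - x)) \<le> (e/3) * norm (y - x)"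
    by blast
  define \<delta> where "\<delta> = min d1 r / 2"
  have \<delta>: "\<delta> > 0" using d1 r by (simp add: \<delta>_def)
  have small: "norm z < d1" "z \<in> ball 0 r" if "norm z < 2 * \<delta>" for z :: "real^'n"
    using that by (auto simp: \<delta>_def)
  have appz: "norm (?G (x + z) - ?G x - G' z) \<le> (e/3) * norm z" if "norm z < 2 * \<delta>" for z
    using app[of "x + z"] small[OF that] by simp
  have difz: "f differentiable (at (x + z))" if "norm z < 2 * \<delta>" for z
    using dif small[OF that] by (simp add: dist_norm)
  show ?thesis
  proof (intro exI[of _ \<delta>] conjI allI impI)
    show "\<delta> > 0" by (rule \<delta>)
    fix t assume t: "0 < t \<and> t < \<delta>"
    let ?a = "x + t *\<^sub>R axis j 1"
    let ?ei = "axis i (1::real)"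
    define h where "h s = f (?a + s *\<^sub>R ?ei) - f (x + s *\<^sub>R ?ei) - s * (t * ?c)" for s
    define h' where "h' s = ?G (?a + s *\<^sub>R ?ei) $ i - ?G (x + s *\<^sub>R ?ei) $ i - t * ?c" for s
    have nz1: "norm (t *\<^sub>R axis j 1 + s *\<^sub>R ?ei) < 2 * \<delta>" if "s \<in> {0..t}" for s
    proof -
      have "norm (t *\<^sub>R axis j 1 + s *\<^sub>R ?ei) \<le> norm (t *\<^sub>R axis j (1::real)) + norm (s *\<^sub>R ?ei)"
        by (rule norm_triangle_ineq)
      also have "\<dots> = t + s" using that t by simp
      finally show ?thesis using that t by simp
    qed
    have nz2: "norm (s *\<^sub>R ?ei) < 2 * \<delta>" if "s \<in> {0..t}" for s
      using that t by simp
    have hder: "(h has_field_derivative h' s) (at s within {0..t})" if s: "s \<in> {0..t}" for s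
    proof -
      have d1: "(f has_derivative frechet_derivative f (at (?a + s *\<^sub>R ?ei))) (at (?a + s *\<^sub>R ?ei))"
      proof -
        have "f differentiable (at (?a + s *\<^sub>R ?ei))" using difz[OF nz1[OF s]] by (simp add: add.assoc)
        thus ?thesis by (rule frechet_derivative_works[THEN iffD1])
      qed
      have d2: "(f has_derivative frechet_derivative f (at (x + s *\<^sub>R ?ei))) (at (x + s *\<^sub>R ?ei))"
        using difz[OF nz2[OF s]] by (rule frechet_derivative_works[THEN iffD1])
      have l1: "linear (frechet_derivative f (at (?a + s *\<^sub>R ?ei)))"
        using d1 has_derivative_linear by blast
      have l2: "linear (frechet_derivative f (at (x + s *\<^sub>R ?ei)))"
        using d2 has_derivative_linear by blast
      have "((\<lambda>s. f (?a + s *\<^sub>R ?ei) - f (x + s *\<^sub>R ?ei) - s * (t * ?c)) has_field_derivative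
          (frechet_derivative f (at (?a + s *\<^sub>R ?ei)) ?ei - frechet_derivative f (at (x + s *\<^sub>R ?ei)) ?ei - 1 * (t * ?c)))
          (at s within {0..t})"
      proof -
        have lc: "((\<lambda>z. z * (t * ?c)) has_field_derivative 1 * (t * ?c)) (at s within {0..t})"
          by (rule DERIV_cmult_right[OF DERIV_ident])
        show ?thesis
          by (intro DERIV_diff deriv_line[OF d1 l1] deriv_line[OF d2 l2] lc)
      qed
      thus ?thesis unfolding h_def h'_def grad_def by simp
    qed
    have hb: "norm (h' s) \<le> e * t" if s: "s \<in> {0..t}" for s
    proof -
      let ?z1 = "t *\<^sub>R axis j 1 + s *\<^sub>R ?ei" and ?z2 = "s *\<^sub>R ?ei"
      have "?G (?a + s *\<^sub>R ?ei) - ?G (x + ?z2) - t *\<^sub>R G' (axis j 1)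
          = (?G (x + ?z1) - ?G x - G' ?z1) - (?G (x + ?z2) - ?G x - G' ?z2)"
        using linear_add[OF linG, of "t *\<^sub>R axis j 1" "s *\<^sub>R ?ei"] linear_scale[OF linG]
        by (simp add: algebra_simps)
      hence "norm (?G (?a + s *\<^sub>R ?ei) - ?G (x + ?z2) - t *\<^sub>R G' (axis j 1))
          \<le> (e/3) * norm ?z1 + (e/3) * norm ?z2"
        using appz[OF nz1[OF s]] appz[OF nz2[OF s]] norm_triangle_ineq4 by (smt (verit))
      also have "\<dots> \<le> (e/3) * (2*t) + (e/3) * t"
      proof -
        have "norm ?z1 \<le> norm (t *\<^sub>R axis j (1::real)) + norm (s *\<^sub>R ?ei)" by (rule norm_triangle_ineq)
        hence "norm ?z1 \<le> 2 * t" using s t by simp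
        moreover have "norm ?z2 \<le> t" using s t by simp
        ultimately show ?thesis using e by (intro add_mono mult_left_mono) auto
      qed
      finally have "norm (?G (?a + s *\<^sub>R ?ei) - ?G (x + ?z2) - t *\<^sub>R G' (axis j 1)) \<le> e * t" by simp
      moreover have "\<bar>h' s\<bar> \<le> norm (?G (?a + s *\<^sub>R ?ei) - ?G (x + ?z2) - t *\<^sub>R G' (axis j 1))"
        using component_le_norm_cart[of "?G (?a + s *\<^sub>R ?ei) - ?G (x + ?z2) - t *\<^sub>R G' (axis j 1)" i]
        by (simp add: h'_def)
      ultimately show ?thesis by simp
    qed
    have "norm (h t - h 0) \<le> (e * t) * norm (t - 0)"
      by (rule field_differentiable_bound[OF convex_real_interval(5) hder hb]) (use t in auto)
    moreover have "h t - h 0 = (f (x + t *\<^sub>R axis j 1 + t *\<^sub>R axis i 1) - f (x + t *\<^sub>R axis i 1) - f (x + t *\<^sub>R axis j 1) + f x)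
       - t*t*?c"
      by (simp add: h_def)
    ultimately show "\<bar>(f (x + t *\<^sub>R axis j 1 + t *\<^sub>R axis i 1) - f (x + t *\<^sub>R axis i 1) - f (x + t *\<^sub>R axis j 1) + f x)
       - t*t*?c\<bar> \<le> e * (t*t)"
      using t by (simp add: mult.assoc)
  qed
qed

lemma abs_two: "\<bar>(X::real) - a\<bar> \<le> E \<Longrightarrow> \<bar>Y - b\<bar> \<le> E \<Longrightarrow> X = Y \<Longrightarrow> \<bar>a - b\<bar> \<le> 2 * E"
  by (simp add: abs_le_iff)

lemma aux_sq: "\<bar>(c::real)*c*a - c*c*b\<bar> \<le> 2 * (e * (c*c)) \<Longrightarrow> (c*c) * \<bar>a - b\<bar> \<le> (c*c) * (2 * e)"
proof -
  assume h: "\<bar>c*c*a - c*c*b\<bar> \<le> 2 * (e * (c*c))"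
  have "c*c*a - c*c*b = (c*c)*(a-b)" by (simp add: right_diff_distrib)
  moreover have "\<bar>(c*c)*(a-b)\<bar> = (c*c)*\<bar>a-b\<bar>" by (simp add: abs_mult)
  ultimately show ?thesis using h by (simp add: mult_ac)
qed

lemma hessian_sym:
  fixes f :: "real^'n \<Rightarrow> real"
  assumes "twice_differentiable_at f x"
  shows "sym_mat (hessian f x)"
proof -
  obtain r where r: "r > 0" and dif: "\<And>y. y \<in> ball x r \<Longrightarrow> f differentiable (at y)"
    using assms unfolding twice_differentiable_at_def eventually_nhds_metric
    by (auto simp: dist_commute)
  let ?G' = "frechet_derivative (grad f) (at x)"
  have G': "(grad f has_derivative ?G') (at x)"
    using assms frechet_derivative_works unfolding twice_differentiable_at_def by blast
  have eq: "?G' (axis j 1) $ i = ?G' (axis i 1) $ j" for i j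
  proof (rule ccontr)
    assume ne: "?G' (axis j 1) $ i \<noteq> ?G' (axis i 1) $ j"
    define e where "e = \<bar>?G' (axis j 1) $ i - ?G' (axis i 1) $ j\<bar> / 3"
    have e: "e > 0" using ne by (simp add: e_def)
    obtain d1 where d1: "d1 > 0" and A: "\<And>t. 0 < t \<and> t < d1 \<Longrightarrow>
      \<bar>(f (x + t *\<^sub>R axis j 1 + t *\<^sub>R axis i 1) - f (x + t *\<^sub>R axis i 1) - f (x + t *\<^sub>R axis j 1) + f x)
       - t*t*(?G' (axis j 1) $ i)\<bar> \<le> e * (t*t)"
      using mixed_approx[OF r dif G' e, of j i] by blast
    obtain d2 where d2: "d2 > 0" and B: "\<And>t. 0 < t \<and> t < d2 \<Longrightarrow>
      \<bar>(f (x + t *\<^sub>R axis i 1 + t *\<^sub>R axis j 1) - f (x + t *\<^sub>R axis j 1) - f (x + t *\<^sub>R axis i 1) + f x)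
       - t*t*(?G' (axis i 1) $ j)\<bar> \<le> e * (t*t)"
      using mixed_approx[OF r dif G' e, of i j] by blast
    define t where "t = min d1 d2 / 2"
    have t: "0 < t" "t < d1" "t < d2" using d1 d2 by (auto simp: t_def)
    have sw: "x + t *\<^sub>R axis i 1 + t *\<^sub>R axis j 1 = x + t *\<^sub>R axis j 1 + t *\<^sub>R axis i (1::real)"
      by (simp add: algebra_simps)
    have "\<bar>t*t*(?G' (axis j 1) $ i) - t*t*(?G' (axis i 1) $ j)\<bar> \<le> 2 * (e * (t*t))"
    proof -
      note a1 = A[OF conjI[OF t(1) t(2)]]
      note b1 = B[OF conjI[OF t(1) t(3)], unfolded sw]
      have eqXY: "f (x + t *\<^sub>R axis j 1 + t *\<^sub>R axis i 1) - f (x + t *\<^sub>R axis i 1) - f (x + t *\<^sub>R axis j 1) + f x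
        = f (x + t *\<^sub>R axis j 1 + t *\<^sub>R axis i 1) - f (x + t *\<^sub>R axis j 1) - f (x + t *\<^sub>R axis i 1) + f x"
        by (simp only: diff_add_eq diff_diff_eq add.commute)
      show ?thesis using abs_two[OF a1 b1 eqXY] .
    qed
    hence "(t*t) * \<bar>?G' (axis j 1) $ i - ?G' (axis i 1) $ j\<bar> \<le> (t*t) * (2 * e)"
      by (rule aux_sq)
    hence "\<bar>?G' (axis j 1) $ i - ?G' (axis i 1) $ j\<bar> \<le> 2 * e"
      using t by (simp add: mult_le_cancel_left_pos)
    thus False using e by (simp add: e_def)
  qed
  show ?thesis
    unfolding sym_mat_def hessian_def matrix_def transpose_def
    by (simp add: vec_eq_iff eq)
qed




lemma arith1:
  fixes lam Lam p q a :: real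
  assumes l: "0 < lam" "lam \<le> Lam" and pq: "0 \<le> p" "0 \<le> q"
    and lo: "lam * p - Lam * q \<le> a" and hi: "a \<le> Lam * p - lam * q"
  defines "C \<equiv> (Lam + 1) / lam + Lam + 1"
  shows "pos_part a + q \<le> C * (neg_part a + p)" "neg_part a + p \<le> C * (pos_part a + q)"
proof -
  define k where "k = 1 / lam"
  have k: "k > 0" "k * lam = 1" using l by (auto simp: k_def)
  have Lam0: "Lam > 0" using l by simp
  have Ck: "C = (Lam + 1) * k + Lam + 1" by (simp add: C_def k_def)
  have F1: "p \<le> k * a + (k * Lam) * q"
  proof -
    have "k * (lam * p) \<le> k * (a + Lam * q)" using lo k by (intro mult_left_mono) auto
    moreover have "k * (lam * p) = p" using k(2) by (metis mult.assoc mult.left_neutral)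
    moreover have "k * (a + Lam * q) = k * a + (k * Lam) * q" by (simp add: algebra_simps)
    ultimately show ?thesis by linarith
  qed
  have F2: "q \<le> (k * Lam) * p - k * a"
  proof -
    have "k * (lam * q) \<le> k * (Lam * p - a)" using hi k by (intro mult_left_mono) auto
    moreover have "k * (lam * q) = q" using k(2) by (metis mult.assoc mult.left_neutral)
    moreover have "k * (Lam * p - a) = (k * Lam) * p - k * a" by (simp add: algebra_simps)
    ultimately show ?thesis by linarith
  qed
  have c1: "k \<le> C" "k * Lam \<le> C" "Lam + k * Lam \<le> C"
    using k Lam0 unfolding Ck by (auto simp: algebra_simps)
  show "pos_part a + q \<le> C * (neg_part a + p)"
  proof (cases "a \<ge> 0")
    case True
    hence e: "pos_part a = a" "neg_part a = 0" by (auto simp: pos_part_def neg_part_def)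
    have "a \<le> Lam * p" using hi l pq by (smt (verit) mult_nonneg_nonneg)
    moreover have "q \<le> (k * Lam) * p" using F2 True k by (smt (verit) mult_nonneg_nonneg)
    ultimately have "a + q \<le> (Lam + k * Lam) * p" by (simp add: algebra_simps)
    also have "\<dots> \<le> C * p" using c1 pq by (intro mult_right_mono) auto
    finally show ?thesis using e by simp
  next
    case False
    hence e: "pos_part a = 0" "neg_part a = - a" by (auto simp: pos_part_def neg_part_def)
    have "q \<le> (k * Lam) * p + k * (- a)" using F2 by simp
    also have "\<dots> \<le> C * p + C * (- a)"
      using c1 pq False by (intro add_mono mult_right_mono mult_left_mono) auto
    finally show ?thesis using e by (simp add: algebra_simps)
  qed
  show "neg_part a + p \<le> C * (pos_part a + q)"
  proof (cases "a \<ge> 0")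
    case True
    hence e: "pos_part a = a" "neg_part a = 0" by (auto simp: pos_part_def neg_part_def)
    have "p \<le> k * a + (k * Lam) * q" by (rule F1)
    also have "\<dots> \<le> C * a + C * q"
      using c1 pq True by (intro add_mono mult_right_mono) auto
    finally show ?thesis using e by (simp add: algebra_simps)
  next
    case False
    hence e: "pos_part a = 0" "neg_part a = - a" by (auto simp: pos_part_def neg_part_def)
    have "- a \<le> Lam * q" using lo l pq by (smt (verit) mult_nonneg_nonneg)
    moreover have "p \<le> (k * Lam) * q" using F1 False k by (smt (verit) mult_pos_neg)
    ultimately have "- a + p \<le> (Lam + k * Lam) * q" by (simp add: algebra_simps)
    also have "\<dots> \<le> C * q" using c1 pq by (intro mult_right_mono) auto
    finally show ?thesis using e by simp
  qed
qed

lemma arith2: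
  fixes C a p q :: real
  assumes C: "1 \<le> C" and pq: "0 \<le> p" "0 \<le> q"
    and h: "(pos_part a + q) / C \<le> neg_part a + p"
  shows "a \<le> C * p - q / C"
proof -
  have Cp: "C > 0" using C by simp
  have qC: "q / C \<le> q"
  proof -
    have "q \<le> q * C" using C pq by (simp add: mult_le_cancel_left1)
    thus ?thesis using Cp by (simp add: divide_le_eq)
  qed
  have pC: "p \<le> C * p" using C pq by (simp add: mult_le_cancel_right1)
  show ?thesis
  proof (cases "a \<ge> 0")
    case True
    hence e: "pos_part a = a" "neg_part a = 0" by (auto simp: pos_part_def neg_part_def)
    have "a + q \<le> C * p" using h Cp e by (simp add: divide_le_eq mult.commute)
    thus ?thesis using qC by linarith
  next
    case False
    hence e: "pos_part a = 0" "neg_part a = - a" by (auto simp: pos_part_def neg_part_def)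
    have "q / C \<le> - a + p" using h e by simp
    thus ?thesis using pC by linarith
  qed
qed

definition Psi :: "real \<Rightarrow> real^'n^'n \<Rightarrow> real" where
  "Psi C M = (C - 1/C) * trace (mat_pos M) + (1/C) * trace M"

lemma Psi_sub:
  assumes C: "1 \<le> C" and s: "sym_mat A" "sym_mat B"
  shows "Psi C (A + B) \<le> Psi C A + Psi C B"
proof -
  have c: "0 \<le> C - 1/C" using C mult_mono[OF C C] by (simp add: field_simps)
  have "(C - 1/C) * trace (mat_pos (A + B)) \<le> (C - 1/C) * (trace (mat_pos A) + trace (mat_pos B))"
    using phi_subadd[OF s] c by (rule mult_left_mono)
  thus ?thesis unfolding Psi_def by (simp add: trace_add algebra_simps)
qed

lemma Psi_mono:
  assumes C: "1 \<le> C" and Z: "sym_mat Z" and B: "psd B"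
  shows "trace B / C \<le> Psi C (Z + B) - Psi C Z" "Psi C (Z + B) - Psi C Z \<le> C * trace B"
proof -
  have c: "0 \<le> C - 1/C" using C mult_mono[OF C C] by (simp add: field_simps)
  have e: "Psi C (Z + B) - Psi C Z = (C - 1/C) * (trace (mat_pos (Z + B)) - trace (mat_pos Z)) + trace B / C"
    unfolding Psi_def by (simp add: trace_add algebra_simps)
  have m1: "0 \<le> trace (mat_pos (Z + B)) - trace (mat_pos Z)" using phi_mono(1)[OF Z B] by simp
  have m2: "trace (mat_pos (Z + B)) - trace (mat_pos Z) \<le> trace B" using phi_mono(2)[OF Z B] by simp
  show "trace B / C \<le> Psi C (Z + B) - Psi C Z" unfolding e using c m1 by simp
  have "(C - 1/C) * (trace (mat_pos (Z + B)) - trace (mat_pos Z)) \<le> (C - 1/C) * trace B"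
    using m2 c by (rule mult_left_mono)
  moreover have "(C - 1/C) * trace B + trace B / C = C * trace B" using C by (simp add: field_simps)
  ultimately show "Psi C (Z + B) - Psi C Z \<le> C * trace B" unfolding e by linarith
qed

lemma Psi_zero: "Psi C (0::real^'n^'n) = 0"
  unfolding Psi_def phi_zero trace_0[unfolded mat_0] by simp

lemma ell_trace: "uniformly_elliptic (trace :: real^'n^'n \<Rightarrow> real) 1 1"
  unfolding uniformly_elliptic_def by (simp add: trace_add)

theorem corollary5p2:
  fixes \<Omega> :: "(real \<times> (real^'n)) set"
    and u :: "real \<Rightarrow> real^'n \<Rightarrow> real"
  assumes diff_t: "\<And>t x. (t, x) \<in> \<Omega> \<Longrightarrow> (\<lambda>s. u s x) differentiable (at t)"
    and diff_x: "\<And>t x. (t, x) \<in> \<Omega> \<Longrightarrow> twice_differentiable_at (\<lambda>y. u t y) x"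
  shows "(\<exists>lam Lam (F :: real^'n^'n \<Rightarrow> real).
            0 < lam \<and> lam \<le> Lam \<and> uniformly_elliptic F lam Lam \<and>
            (\<forall>(t, x) \<in> \<Omega>. time_deriv u t x = F (space_hessian u t x)))
    \<longleftrightarrow>
    (\<exists>C::real. 1 \<le> C \<and>
       (\<forall>(t, x) \<in> \<Omega>. \<forall>(s, y) \<in> \<Omega>.
          let a = time_deriv u t x - time_deriv u s y;
              M = space_hessian u t x - space_hessian u s y;
              N = neg_part a + trace (mat_pos M);
              D = pos_part a + trace (mat_neg M)
          in D / C \<le> N \<and> N \<le> C * D))"
proof -
  have symH: "sym_mat (space_hessian u t x)" if "(t, x) \<in> \<Omega>" for t x
    unfolding space_hessian_def by (rule hessian_sym[OF diff_x[OF that]])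
  show ?thesis
  proof
    assume "\<exists>lam Lam (F :: real^'n^'n \<Rightarrow> real).
            0 < lam \<and> lam \<le> Lam \<and> uniformly_elliptic F lam Lam \<and>
            (\<forall>(t, x) \<in> \<Omega>. time_deriv u t x = F (space_hessian u t x))"
    then obtain lam Lam and F :: "real^'n^'n \<Rightarrow> real" where l: "0 < lam" "lam \<le> Lam"
      and ell: "uniformly_elliptic F lam Lam"
      and eq: "\<forall>(t, x) \<in> \<Omega>. time_deriv u t x = F (space_hessian u t x)" by blast
    define C where "C = (Lam + 1) / lam + Lam + 1"
    have C1: "1 \<le> C" using l by (simp add: C_def)
    have Cp: "0 < C" using C1 by simp
    show "\<exists>C::real. 1 \<le> C \<and>
       (\<forall>(t, x) \<in> \<Omega>. \<forall>(s, y) \<in> \<Omega>.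
          let a = time_deriv u t x - time_deriv u s y;
              M = space_hessian u t x - space_hessian u s y;
              N = neg_part a + trace (mat_pos M);
              D = pos_part a + trace (mat_neg M)
          in D / C \<le> N \<and> N \<le> C * D)"
    proof (intro exI[of _ C] conjI C1, clarify)
      fix t x s y assume tx: "(t, x) \<in> \<Omega>" and sy: "(s, y) \<in> \<Omega>"
      let ?Y1 = "space_hessian u t x" and ?Y2 = "space_hessian u s y"
      let ?M = "?Y1 - ?Y2"
      let ?P = "mat_pos ?M" and ?Q = "mat_neg ?M"
      let ?a = "time_deriv u t x - time_deriv u s y"
      have sM: "sym_mat ?M" by (rule sym_diff[OF symH[OF tx] symH[OF sy]])
      have pn: "pn_decomp ?M ?P ?Q" by (rule mat_pn_decomp[OF sM])
      have pP: "psd ?P" and pQ: "psd ?Q" and MPQ: "?M = ?P - ?Q" using pn by (auto simp: pn_decomp_def)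
      have sQ: "sym_mat ?Q" using pQ by (simp add: psd_def)
      have sA: "sym_mat (?Y2 - ?Q)" by (rule sym_diff[OF symH[OF sy] sQ])
      have A1: "?Y2 - ?Q + ?P = ?Y1"
      proof -
        have "?Y2 - ?Q + ?P = ?Y2 + (?P - ?Q)" by (simp add: algebra_simps)
        also have "\<dots> = ?Y2 + ?M" using MPQ by simp
        finally show ?thesis by simp
      qed
      have A2: "?Y2 - ?Q + ?Q = ?Y2" by simp
      have E: "lam * trace B \<le> F (A + B) - F A \<and> F (A + B) - F A \<le> Lam * trace B"
        if "sym_mat A" "psd B" for A B using ell that unfolding uniformly_elliptic_def by blast
      have e1: "lam * trace ?P \<le> F ?Y1 - F (?Y2 - ?Q)" "F ?Y1 - F (?Y2 - ?Q) \<le> Lam * trace ?P"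
        using E[OF sA pP] unfolding A1 by auto
      have e2: "lam * trace ?Q \<le> F ?Y2 - F (?Y2 - ?Q)" "F ?Y2 - F (?Y2 - ?Q) \<le> Lam * trace ?Q"
        using E[OF sA pQ] unfolding A2 by auto
      have "time_deriv u t x = F ?Y1" using bspec[OF eq tx] by simp
      moreover have "time_deriv u s y = F ?Y2" using bspec[OF eq sy] by simp
      ultimately have a: "?a = F ?Y1 - F ?Y2" by simp
      have lo: "lam * trace ?P - Lam * trace ?Q \<le> ?a" using a e1 e2 by linarith
      have hi: "?a \<le> Lam * trace ?P - lam * trace ?Q" using a e1 e2 by linarith
      have tp: "0 \<le> trace ?P" "0 \<le> trace ?Q" using pP pQ psd_trace_nonneg by auto
      note r = arith1[OF l tp lo hi, folded C_def]
      have "(pos_part ?a + trace ?Q) / C \<le> neg_part ?a + trace ?P"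
        using r(1) Cp by (simp add: divide_le_eq mult.commute)
      thus "let a = ?a; M = ?M; N = neg_part a + trace (mat_pos M); D = pos_part a + trace (mat_neg M)
          in D / C \<le> N \<and> N \<le> C * D"
        using r(2) by (simp add: Let_def)
    qed
  next
    assume "\<exists>C::real. 1 \<le> C \<and>
       (\<forall>(t, x) \<in> \<Omega>. \<forall>(s, y) \<in> \<Omega>.
          let a = time_deriv u t x - time_deriv u s y;
              M = space_hessian u t x - space_hessian u s y;
              N = neg_part a + trace (mat_pos M);
              D = pos_part a + trace (mat_neg M)
          in D / C \<le> N \<and> N \<le> C * D)"
    then obtain C where C1: "1 \<le> C" and hC: "\<forall>(t, x) \<in> \<Omega>. \<forall>(s, y) \<in> \<Omega>.
          let a = time_deriv u t x - time_deriv u s y;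
              M = space_hessian u t x - space_hessian u s y;
              N = neg_part a + trace (mat_pos M);
              D = pos_part a + trace (mat_neg M)
          in D / C \<le> N \<and> N \<le> C * D" by blast
    have Cp: "0 < C" using C1 by simp
    define g where "g p = time_deriv u (fst p) (snd p)" for p
    define H where "H p = space_hessian u (fst p) (snd p)" for p
    have symHp: "sym_mat (H p)" if "p \<in> \<Omega>" for p
      using symH[of "fst p" "snd p"] that by (simp add: H_def)
    have data: "g p - g q \<le> Psi C (H p - H q)" if p: "p \<in> \<Omega>" and q: "q \<in> \<Omega>" for p q
    proof -
      let ?M = "H p - H q"
      have sM: "sym_mat ?M" by (rule sym_diff[OF symHp[OF p] symHp[OF q]])
      have hC': "\<forall>p\<in>\<Omega>. \<forall>q\<in>\<Omega>. (pos_part (g p - g q) + trace (mat_neg (H p - H q))) / C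
                   \<le> neg_part (g p - g q) + trace (mat_pos (H p - H q))"
        using hC unfolding g_def H_def Let_def by (simp add: case_prod_beta)
      have h: "(pos_part (g p - g q) + trace (mat_neg ?M)) / C \<le> neg_part (g p - g q) + trace (mat_pos ?M)"
        using hC' p q by blast
      note f = phi_facts[OF sM]
      have "g p - g q \<le> C * trace (mat_pos ?M) - trace (mat_neg ?M) / C"
        by (rule arith2[OF C1 f(1) f(2) h])
      also have "\<dots> = Psi C ?M" unfolding Psi_def f(3) using Cp by (simp add: field_simps)
      finally show ?thesis .
    qed
    show "\<exists>lam Lam (F :: real^'n^'n \<Rightarrow> real).
            0 < lam \<and> lam \<le> Lam \<and> uniformly_elliptic F lam Lam \<and>
            (\<forall>(t, x) \<in> \<Omega>. time_deriv u t x = F (space_hessian u t x))"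
    proof (cases "\<Omega> = {}")
      case True
      show ?thesis
        by (intro exI[of _ "1::real"] exI[of _ "trace :: real^'n^'n \<Rightarrow> real"]) (simp add: ell_trace True)
    next
      case False
      then obtain p0 where p0: "p0 \<in> \<Omega>" by blast
      define S where "S X = (\<lambda>p. g p + Psi C (X - H p)) ` \<Omega>" for X
      define F where "F X = Inf (S X)" for X
      have Sne: "S X \<noteq> {}" for X using False by (simp add: S_def)
      have bdd: "bdd_below (S X)" if X: "sym_mat X" for X
        unfolding S_def
      proof (rule bdd_belowI2)
        fix p assume p: "p \<in> \<Omega>"
        have "g p0 - g p \<le> Psi C (H p0 - H p)" by (rule data[OF p0 p])
        also have "\<dots> = Psi C ((H p0 - X) + (X - H p))" by simp
        also have "\<dots> \<le> Psi C (H p0 - X) + Psi C (X - H p)"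
          by (rule Psi_sub[OF C1 sym_diff[OF symHp[OF p0] X] sym_diff[OF X symHp[OF p]]])
        finally show "g p0 - Psi C (H p0 - X) \<le> g p + Psi C (X - H p)" by simp
      qed
      have Flow: "F X \<le> g p + Psi C (X - H p)" if "sym_mat X" "p \<in> \<Omega>" for X p
        unfolding F_def by (rule cInf_lower[OF _ bdd[OF that(1)]]) (use that(2) in \<open>simp add: S_def\<close>)
      have ue: "uniformly_elliptic F (1/C) C"
        unfolding uniformly_elliptic_def
      proof (intro allI impI conjI)
        fix A B :: "real^'n^'n" assume AB: "sym_mat A \<and> psd B"
        hence sA: "sym_mat A" and pB: "psd B" by auto
        have sB: "sym_mat B" using pB by (simp add: psd_def)
        have sAB: "sym_mat (A + B)" by (rule sym_add[OF sA sB])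
        have shift: "A + B - H p = (A - H p) + B" for p by (simp add: algebra_simps)
        have m: "trace B / C \<le> Psi C (A + B - H p) - Psi C (A - H p)"
             "Psi C (A + B - H p) - Psi C (A - H p) \<le> C * trace B" if "p \<in> \<Omega>" for p
          unfolding shift using Psi_mono[OF C1 sym_diff[OF sA symHp[OF that]] pB] by auto
        have "F A + trace B / C \<le> F (A + B)"
          unfolding F_def[of "A + B"]
        proof (rule cInf_greatest[OF Sne])
          fix z assume "z \<in> S (A + B)"
          then obtain p where p: "p \<in> \<Omega>" and z: "z = g p + Psi C (A + B - H p)" by (auto simp: S_def)
          show "F A + trace B / C \<le> z" using Flow[OF sA p] m(1)[OF p] z by linarith
        qed
        thus "1 / C * trace B \<le> F (A + B) - F A" by simp
        have "F (A + B) - C * trace B \<le> F A"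
          unfolding F_def[of A]
        proof (rule cInf_greatest[OF Sne])
          fix z assume "z \<in> S A"
          then obtain p where p: "p \<in> \<Omega>" and z: "z = g p + Psi C (A - H p)" by (auto simp: S_def)
          show "F (A + B) - C * trace B \<le> z" using Flow[OF sAB p] m(2)[OF p] z by linarith
        qed
        thus "F (A + B) - F A \<le> C * trace B" by simp
      qed
      have val: "time_deriv u t x = F (space_hessian u t x)" if tx: "(t, x) \<in> \<Omega>" for t x
      proof -
        let ?q = "(t, x)"
        have "F (H ?q) \<le> g ?q + Psi C (H ?q - H ?q)" by (rule Flow[OF symHp[OF tx] tx])
        hence "F (H ?q) \<le> g ?q" by (simp add: Psi_zero)
        moreover have "g ?q \<le> F (H ?q)"
          unfolding F_def[of "H ?q"]
        proof (rule cInf_greatest[OF Sne])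
          fix z assume "z \<in> S (H ?q)"
          then obtain p where p: "p \<in> \<Omega>" and z: "z = g p + Psi C (H ?q - H p)" by (auto simp: S_def)
          show "g ?q \<le> z" using data[OF tx p] z by linarith
        qed
        ultimately show ?thesis by (simp add: g_def H_def)
      qed
      have "0 < 1/C" "1/C \<le> C" using C1 mult_mono[OF C1 C1] by (auto simp: field_simps)
      thus ?thesis using ue val by blast
    qed
  qed
qed


end
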